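(* For every integer $n \geq 3$, $$\Delta_n(FP/ES) = \frac{2^{n-2}}{n-1} \quad\text{and}\quad \Delta_n(ES/FP) = \frac{n-1}{2},$$ where $$\Delta_n(FP/ES) = \max_{T\in RB(n)}\ \max_{i\in[n]}\ \sup_{l>0} \frac{FP_T(i)}{ES_T(i)},\qquad \Delta_n(ES/FP) = \max_{T\in RB(n)}\ \max_{i\in[n]}\ \sup_{l>0} \frac{ES_T(i)}{FP_T(i)},$$ the suprema being taken over all assignments $l$ of strictly positive lengths to the edges of $T$. Moreover, both equalities remain true if the suprema are restricted to positive edge-length assignments satisfying the molecular clock condition (MC).
   Context: $[n]=\{1,\dots,n\}$. A rooted binary phylogenetic tree on $[n]$ is a rooted tree with root $\rho$ and leaf set $[n]$ in which every non-leaf vertex (including $\rho$) is unlabelled and has out-degree exactly 2. Two such trees are identified if there is a graph isomorphism between them that sends leaf $x$ to leaf $x$ for every $x$. $RB(n)$ denotes the (finite) set of all such trees. Each edge $e$ carries a length $l(e)>0$. For an edge $e$, $n(e)$ is the number of leaves descended from $e$ (that is, below its endpoint farther from the root). $P(T;\rho,i)$ is the path from $\rho$ to leaf $i$. The Fair Proportion index is $FP_T(i)=\sum_{e\in P(T;\rho,i)} l(e)/n(e)$. The Equal Splits index is $ES_T(i)=\sum_{e\in P(T;\rho,i)} l(e)/\Pi(e,i)$, where $\Pi(e,i)=1$ if $e$ is the pendant edge incident with $i$, and otherwise $\Pi(e,i)$ is the product of the out-degrees of the interior vertices on the directed path from the lower endpoint of $e$ to $i$. In a binary tree this equals $2^{k}$,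 where $k$ is the number of edges strictly between $e$ and $i$. Molecular clock condition (MC): the sum of the edge lengths on the path from $\rho$ to leaf $i$ is the same for every leaf $i$. *)

theory Defs
  imports Main "HOL-Library.Extended_Real"
begin

text \<open>The order of the
  two children is irrelevant for the quantities below (max over trees is the same).\<close>
datatype ptree = Leaf nat | Node ptree ptree

fun leaf_list :: "ptree \<Rightarrow> nat list" where
  "leaf_list (Leaf x) = [x]"
| "leaf_list (Node a b) = leaf_list a @ leaf_list b"

definition leaves :: "ptree \<Rightarrow> nat set" where
  "leaves t = set (leaf_list t)"

text \<open>Vertices are addressed by positions (paths from the root; False = left child).\<close>
fun pos :: "ptree \<Rightarrow> bool list set" where
  "pos (Leaf x) = {[]}"
| "pos (Node a b) = insert [] (Cons False ` pos a \<union> Cons True ` pos b)"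

fun subtree :: "ptree \<Rightarrow> bool list \<Rightarrow> ptree" where
  "subtree t [] = t"
| "subtree (Node a b) (False # p) = subtree a p"
| "subtree (Node a b) (True # p) = subtree b p"
| "subtree (Leaf x) (_ # p) = Leaf x"

text \<open>Edges correspond to non-root vertices (the edge into that vertex from its parent).\<close>
definition edges :: "ptree \<Rightarrow> bool list set" where
  "edges t = pos t - {[]}"

definition RB :: "nat \<Rightarrow> ptree set" where
  "RB n = {t. distinct (leaf_list t) \<and> set (leaf_list t) = {1..n}}"

definition nbelow :: "ptree \<Rightarrow> bool list \<Rightarrow> nat" where
  "nbelow t e = card (leaves (subtree t e))"

definition rpath :: "ptree \<Rightarrow> nat \<Rightarrow> bool list set" where
  "rpath t i = {e \<in> edges t. i \<in> leaves (subtree t e)}"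

definition PiES :: "ptree \<Rightarrow> bool list \<Rightarrow> nat \<Rightarrow> real" where
  "PiES t e i = 2 ^ card {e' \<in> rpath t i. length e < length e'}"

definition FP :: "ptree \<Rightarrow> (bool list \<Rightarrow> real) \<Rightarrow> nat \<Rightarrow> real" where
  "FP t l i = (\<Sum>e\<in>rpath t i. l e / real (nbelow t e))"

definition ES :: "ptree \<Rightarrow> (bool list \<Rightarrow> real) \<Rightarrow> nat \<Rightarrow> real" where
  "ES t l i = (\<Sum>e\<in>rpath t i. l e / PiES t e i)"

text \<open>Positive edge-length assignments (values off the edges are irrelevant).\<close>
definition pos_lengths :: "ptree \<Rightarrow> (bool list \<Rightarrow> real) set" where
  "pos_lengths t = {l. \<forall>e\<in>edges t. 0 < l e}"

definition MC :: "nat \<Rightarrow> ptree \<Rightarrow> (bool list \<Rightarrow> real) \<Rightarrow> bool" where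
  "MC n t l = (\<forall>i\<in>{1..n}. \<forall>j\<in>{1..n}. (\<Sum>e\<in>rpath t i. l e) = (\<Sum>e\<in>rpath t j. l e))"

definition Delta :: "nat \<Rightarrow> (ptree \<Rightarrow> (bool list \<Rightarrow> real) \<Rightarrow> nat \<Rightarrow> real)
    \<Rightarrow> (ptree \<Rightarrow> (bool list \<Rightarrow> real) \<Rightarrow> nat \<Rightarrow> real) \<Rightarrow> ereal" where
  "Delta n A B = (SUP t\<in>RB n. SUP i\<in>{1..n}. SUP l\<in>pos_lengths t. ereal (A t l i / B t l i))"

definition Delta_MC :: "nat \<Rightarrow> (ptree \<Rightarrow> (bool list \<Rightarrow> real) \<Rightarrow> nat \<Rightarrow> real)
    \<Rightarrow> (ptree \<Rightarrow> (bool list \<Rightarrow> real) \<Rightarrow> nat \<Rightarrow> real) \<Rightarrow> ereal" where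
  "Delta_MC n A B = (SUP t\<in>RB n. SUP i\<in>{1..n}.
      SUP l\<in>{l \<in> pos_lengths t. MC n t l}. ereal (A t l i / B t l i))"

end

theory Submission
  imports Defs
begin

definition S :: "ptree \<Rightarrow> nat \<Rightarrow> bool list set" where
  "S t i = {q \<in> pos t. i \<in> leaves (subtree t q)}"

lemma finite_pos: "finite (pos t)"
  by (induction t) auto

lemma finite_leaves: "finite (leaves t)"
  by (simp add: leaves_def)

lemma leaves_ne: "leaves t \<noteq> {}"
  by (induction t) (auto simp: leaves_def)

lemma leaves_Node: "leaves (Node a b) = leaves a \<union> leaves b"
  by (simp add: leaves_def)

lemma leaves_Leaf: "leaves (Leaf x) = {x}"
  by (simp add: leaves_def)

lemma leaves_subtree_sub: "q \<in> pos t \<Longrightarrow> leaves (subtree t q) \<subseteq> leaves t"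
  by (induction t arbitrary: q) (fastforce simp: leaves_Node leaves_Leaf)+

lemma finite_S: "finite (S t i)"
  unfolding S_def using finite_pos by auto

lemma S_empty: "i \<notin> leaves t \<Longrightarrow> S t i = {}"
  unfolding S_def using leaves_subtree_sub by blast

lemma S_Leaf: "S (Leaf x) i = (if i = x then {[]} else {})"
  by (auto simp: S_def leaves_Leaf)

lemma S_Node: "S (Node a b) i = (if i \<in> leaves a \<union> leaves b then {[]} else {})
   \<union> Cons False ` S a i \<union> Cons True ` S b i"
  by (auto simp: S_def leaves_Node)

lemma root_S: "i \<in> leaves t \<Longrightarrow> [] \<in> S t i"
  by (cases t) (auto simp: S_def)

lemma rpath_S: "rpath t i = S t i - {[]}"
  by (auto simp: rpath_def S_def edges_def)

lemma distinct_disj: "distinct (leaf_list (Node a b)) \<Longrightarrow> leaves a \<inter> leaves b = {}"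
  by (simp add: leaves_def)

lemma card_leaves_Node: "distinct (leaf_list (Node a b)) \<Longrightarrow>
   card (leaves (Node a b)) = card (leaves a) + card (leaves b)"
  by (simp add: leaves_Node card_Un_disjoint finite_leaves distinct_disj)

lemma card_leaves_pos: "card (leaves t) \<ge> 1"
  using leaves_ne finite_leaves by (metis card_0_eq less_one not_le)

lemma S_Node_left: "distinct (leaf_list (Node a b)) \<Longrightarrow> i \<in> leaves a \<Longrightarrow>
   S (Node a b) i = insert [] (Cons False ` S a i)"
  using distinct_disj[of a b] S_empty[of i b] by (auto simp: S_Node)

lemma S_Node_right: "distinct (leaf_list (Node a b)) \<Longrightarrow> i \<in> leaves b \<Longrightarrow>
   S (Node a b) i = insert [] (Cons True ` S b i)"
  using distinct_disj[of a b] S_empty[of i a] by (auto simp: S_Node)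

lemma main_struct:
  "distinct (leaf_list t) \<Longrightarrow> p \<in> S t i \<Longrightarrow>
   card {q \<in> S t i. length p < length q} + 1 \<le> card (leaves (subtree t p)) \<and>
   (card {q \<in> S t i. length p < length q} = 0 \<longrightarrow> card (leaves (subtree t p)) = 1)"
proof (induction t arbitrary: p)
  case (Leaf x)
  then show ?case by (auto simp: S_Leaf leaves_Leaf split: if_splits)
next
  case (Node a b)
  have da: "distinct (leaf_list a)" and db: "distinct (leaf_list b)" using Node.prems by auto
  have il: "i \<in> leaves (Node a b)" using Node.prems(2) S_empty by fastforce
  show ?case
  proof (cases "i \<in> leaves a")
    case True
    have SN: "S (Node a b) i = insert [] (Cons False ` S a i)"
      using S_Node_left[OF Node.prems(1) True] .
    show ?thesis
    proof (cases p)
      case Nil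
      have eq: "{q \<in> S (Node a b) i. length p < length q} = Cons False ` S a i"
        using SN Nil by auto
      have c1: "card {q \<in> S (Node a b) i. length p < length q} = card (S a i)"
        unfolding eq by (simp add: card_image)
      have r: "[] \<in> S a i" using root_S True by auto
      from Node.IH(1)[OF da r] have "card {q \<in> S a i. 0 < length q} + 1 \<le> card (leaves a)" by simp
      moreover have "S a i = insert [] {q \<in> S a i. 0 < length q}" using r by auto
      moreover have "finite {q \<in> S a i. 0 < length q}" using finite_S by auto
      ultimately have "card (S a i) \<le> card (leaves a)"
        by (metis (no_types, lifting) card_insert_if length_greater_0_conv mem_Collect_eq Suc_eq_plus1)
      moreover have "card (S a i) \<ge> 1" using r finite_S by (metis card_0_eq empty_iff less_one not_le)
      ultimately show ?thesis using c1 Nil card_leaves_Node[OF Node.prems(1)] card_leaves_pos[of b]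
        by auto
    next
      case (Cons x p')
      have m: "x # p' \<in> insert [] (Cons False ` S a i)" using Node.prems(2) SN Cons by simp
      have x: "x = False" "p' \<in> S a i" using m by auto
      have e0: "{q \<in> insert [] (Cons False ` S a i). Suc (length p') < length q} = Cons False ` {q \<in> S a i. length p' < length q}"
        by auto
      have eq: "{q \<in> S (Node a b) i. length p < length q} = Cons False ` {q \<in> S a i. length p' < length q}"
        using e0 unfolding SN Cons by simp
      have c1: "card {q \<in> S (Node a b) i. length p < length q} = card {q \<in> S a i. length p' < length q}"
        unfolding eq by (simp add: card_image)
      show ?thesis using Node.IH(1)[OF da x(2)] c1 Cons x by simp
    qed
  next
    case False
    hence True: "i \<in> leaves b" using il leaves_Node by auto
    have SN: "S (Node a b) i = insert [] (Cons True ` S b i)"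
      using S_Node_right[OF Node.prems(1) True] .
    show ?thesis
    proof (cases p)
      case Nil
      have eq: "{q \<in> S (Node a b) i. length p < length q} = Cons True ` S b i"
        using SN Nil by auto
      have c1: "card {q \<in> S (Node a b) i. length p < length q} = card (S b i)"
        unfolding eq by (simp add: card_image)
      have r: "[] \<in> S b i" using root_S True by auto
      from Node.IH(2)[OF db r] have "card {q \<in> S b i. 0 < length q} + 1 \<le> card (leaves b)" by simp
      moreover have "S b i = insert [] {q \<in> S b i. 0 < length q}" using r by auto
      moreover have "finite {q \<in> S b i. 0 < length q}" using finite_S by auto
      ultimately have "card (S b i) \<le> card (leaves b)"
        by (metis (no_types, lifting) card_insert_if length_greater_0_conv mem_Collect_eq Suc_eq_plus1)
      moreover have "card (S b i) \<ge> 1" using r finite_S by (metis card_0_eq empty_iff less_one not_le)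
      ultimately show ?thesis using c1 Nil card_leaves_Node[OF Node.prems(1)] card_leaves_pos[of a]
        by auto
    next
      case (Cons x p')
      have m: "x # p' \<in> insert [] (Cons True ` S b i)" using Node.prems(2) SN Cons by simp
      have x: "x = True" "p' \<in> S b i" using m by auto
      have e0: "{q \<in> insert [] (Cons True ` S b i). Suc (length p') < length q} = Cons True ` {q \<in> S b i. length p' < length q}"
        by auto
      have eq: "{q \<in> S (Node a b) i. length p < length q} = Cons True ` {q \<in> S b i. length p' < length q}"
        using e0 unfolding SN Cons by simp
      have c1: "card {q \<in> S (Node a b) i. length p < length q} = card {q \<in> S b i. length p' < length q}"
        unfolding eq by (simp add: card_image)
      show ?thesis using Node.IH(2)[OF db x(2)] c1 Cons x by simp
    qed
  qed
qed

lemma card_sub_le: "p \<in> pos t \<Longrightarrow> card (leaves (subtree t p)) \<le> card (leaves t)"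
  by (simp add: card_mono finite_leaves leaves_subtree_sub)

lemma card_sub_less: "distinct (leaf_list t) \<Longrightarrow> p \<in> pos t \<Longrightarrow> p \<noteq> [] \<Longrightarrow>
   card (leaves (subtree t p)) < card (leaves t)"
proof (cases t)
  case (Leaf x)
  assume "p \<in> pos t" "p \<noteq> []" then show ?thesis using Leaf by simp
next
  case (Node a b)
  assume d: "distinct (leaf_list t)" and p: "p \<in> pos t" "p \<noteq> []"
  have c: "card (leaves t) = card (leaves a) + card (leaves b)" using card_leaves_Node d Node by simp
  from p Node obtain p' where "p = False # p' \<and> p' \<in> pos a \<or> p = True # p' \<and> p' \<in> pos b" by auto
  then show ?thesis
    using card_sub_le[of p' a] card_sub_le[of p' b] card_leaves_pos[of a] card_leaves_pos[of b] c Node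
    by auto
qed

lemma pow_ratio: "k \<le> j \<Longrightarrow> (2::real)^k * (real j + 1) \<le> 2^j * (real k + 1)"
proof (induction j rule: dec_induct)
  case base then show ?case by simp
next
  case (step j)
  have "(2::real)^k \<le> 2^j" using step.hyps(1) by (simp add: power_increasing)
  also have "\<dots> \<le> 2^j * (real k + 1)" by simp
  finally have h: "(2::real)^k \<le> 2^j * (real k + 1)" .
  have "(2::real)^k * (real (Suc j) + 1) = 2^k * (real j + 1) + 2^k" by (simp add: algebra_simps)
  also have "\<dots> \<le> 2^j * (real k + 1) + 2^j * (real k + 1)" using step.IH h by linarith
  also have "\<dots> = 2^(Suc j) * (real k + 1)" by simp
  finally show ?case .
qed

lemma card_leaves_RB: "t \<in> RB n \<Longrightarrow> card (leaves t) = n"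
  by (simp add: RB_def leaves_def)

lemma edge_facts:
  assumes t: "t \<in> RB n" and e: "e \<in> rpath t i"
  shows "card {e' \<in> rpath t i. length e < length e'} + 1 \<le> nbelow t e \<and> nbelow t e + 1 \<le> n \<and>
     (card {e' \<in> rpath t i. length e < length e'} = 0 \<longrightarrow> nbelow t e = 1)"
proof -
  have d: "distinct (leaf_list t)" using t by (simp add: RB_def)
  have eq: "{e' \<in> rpath t i. length e < length e'} = {q \<in> S t i. length e < length q}"
    by (auto simp: rpath_S)
  have eS: "e \<in> S t i" "e \<noteq> []" using e by (auto simp: rpath_S)
  have ep: "e \<in> pos t" using eS by (simp add: S_def)
  have "nbelow t e < n" using card_sub_less[OF d ep eS(2)] card_leaves_RB[OF t] by (simp add: nbelow_def)
  then show ?thesis using main_struct[OF d eS(1)] eq by (simp add: nbelow_def)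
qed

lemma ratio_le: "(B::real) \<ge> 0 \<Longrightarrow> A \<le> c * B \<Longrightarrow> c \<ge> 0 \<Longrightarrow> A / B \<le> c"
  by (cases "B = 0") (auto simp: divide_le_eq mult.commute)

lemma FP_le:
  assumes n: "n \<ge> 3" and t: "t \<in> RB n" and l: "l \<in> pos_lengths t"
  shows "FP t l i \<le> (2 ^ (n - 2) / (real n - 1)) * ES t l i"
proof -
  define c where "c = (2::real) ^ (n - 2) / (real n - 1)"
  have "FP t l i \<le> (\<Sum>e\<in>rpath t i. c * (l e / PiES t e i))"
    unfolding FP_def
  proof (rule sum_mono)
    fix e assume e: "e \<in> rpath t i"
    define k where "k = card {e' \<in> rpath t i. length e < length e'}"
    define N where "N = nbelow t e"
    have f: "k + 1 \<le> N" "N + 1 \<le> n" using edge_facts[OF t e] unfolding k_def N_def by auto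
    have le: "l e \<ge> 0" using l e by (auto simp: pos_lengths_def rpath_def less_imp_le)
    have P: "PiES t e i = 2 ^ k" by (simp add: PiES_def k_def)
    have kj: "k \<le> n - 2" using f by linarith
    have "(2::real)^k * (real (n-2) + 1) \<le> 2^(n-2) * (real k + 1)" using pow_ratio[OF kj] .
    moreover have "real (n-2) + 1 = real n - 1" using n by simp
    moreover have "(2::real)^(n-2) * (real k + 1) \<le> 2^(n-2) * real N" using f by simp
    ultimately have m: "(2::real)^k * (real n - 1) \<le> 2^(n-2) * real N"
      by (metis order_trans)
    have Npos: "real N > 0" using f by simp
    have n1: "real n - 1 > 0" using n by simp
    have "1 / real N \<le> c / 2^k"
      using m Npos n1 by (simp add: c_def field_simps)
    hence "l e * (1 / real N) \<le> l e * (c / 2^k)" using le by (rule mult_left_mono)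
    then show "l e / real (nbelow t e) \<le> c * (l e / PiES t e i)" by (simp add: P N_def mult.commute)
  qed
  also have "\<dots> = c * ES t l i" by (simp add: ES_def sum_distrib_left)
  finally show ?thesis by (simp add: c_def)
qed

lemma ES_le:
  assumes n: "n \<ge> 3" and t: "t \<in> RB n" and l: "l \<in> pos_lengths t"
  shows "ES t l i \<le> ((real n - 1) / 2) * FP t l i"
proof -
  define c where "c = (real n - 1) / 2"
  have "ES t l i \<le> (\<Sum>e\<in>rpath t i. c * (l e / real (nbelow t e)))"
    unfolding ES_def
  proof (rule sum_mono)
    fix e assume e: "e \<in> rpath t i"
    define k where "k = card {e' \<in> rpath t i. length e < length e'}"
    define N where "N = nbelow t e"
    have f: "k + 1 \<le> N" "N + 1 \<le> n" "k = 0 \<longrightarrow> N = 1" using edge_facts[OF t e] unfolding k_def N_def by auto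
    have le: "l e \<ge> 0" using l e by (auto simp: pos_lengths_def rpath_def less_imp_le)
    have P: "PiES t e i = 2 ^ k" by (simp add: PiES_def k_def)
    have m: "real N \<le> c * 2^k"
    proof (cases k)
      case 0 then show ?thesis using f n by (simp add: c_def)
    next
      case (Suc k')
      have "(1::real) \<le> 2^k'" by simp
      hence "real n - 1 \<le> (real n - 1) * 2^k'" using n by simp
      moreover have "real N \<le> real n - 1" using f by simp
      ultimately show ?thesis using Suc by (simp add: c_def)
    qed
    have Npos: "real N > 0" using f by simp
    have "1 / 2^k \<le> c / real N"
      using m Npos by (simp add: field_simps)
    hence "l e * (1 / 2^k) \<le> l e * (c / real N)" using le by (rule mult_left_mono)
    then show "l e / PiES t e i \<le> c * (l e / real (nbelow t e))" by (simp add: P N_def mult.commute)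
  qed
  also have "\<dots> = c * FP t l i" by (simp add: FP_def sum_distrib_left)
  finally show ?thesis by (simp add: c_def)
qed

lemma FP_nonneg: "l \<in> pos_lengths t \<Longrightarrow> FP t l i \<ge> 0"
  unfolding FP_def by (rule sum_nonneg) (auto simp: pos_lengths_def rpath_def less_imp_le)

lemma ES_nonneg: "l \<in> pos_lengths t \<Longrightarrow> ES t l i \<ge> 0"
  unfolding ES_def PiES_def by (rule sum_nonneg) (auto simp: pos_lengths_def rpath_def less_imp_le)

lemma Delta_FP_ES_le:
  assumes n: "n \<ge> 3"
  shows "Delta n FP ES \<le> ereal (2 ^ (n - 2) / (real n - 1))"
  unfolding Delta_def
proof (intro SUP_least)
  fix t i l assume t: "t \<in> RB n" and l: "l \<in> pos_lengths t"
  have "FP t l i / ES t l i \<le> 2 ^ (n - 2) / (real n - 1)"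
    by (rule ratio_le[OF ES_nonneg[OF l] FP_le[OF n t l]]) (use n in simp)
  then show "ereal (FP t l i / ES t l i) \<le> ereal (2 ^ (n - 2) / (real n - 1))" by simp
qed

lemma Delta_ES_FP_le:
  assumes n: "n \<ge> 3"
  shows "Delta n ES FP \<le> ereal ((real n - 1) / 2)"
  unfolding Delta_def
proof (intro SUP_least)
  fix t i l assume t: "t \<in> RB n" and l: "l \<in> pos_lengths t"
  have "ES t l i / FP t l i \<le> (real n - 1) / 2"
    by (rule ratio_le[OF FP_nonneg[OF l] ES_le[OF n t l]]) (use n in simp)
  then show "ereal (ES t l i / FP t l i) \<le> ereal ((real n - 1) / 2)" by simp
qed

lemma Delta_MC_le: "Delta_MC n A B \<le> Delta n A B"
  unfolding Delta_def Delta_MC_def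
  by (intro SUP_mono') (auto intro!: SUP_mono' SUP_subset_mono)

fun cat :: "nat \<Rightarrow> ptree" where
  "cat 0 = Leaf 1"
| "cat (Suc k) = Node (cat k) (Leaf (k+2))"

lemma leaf_list_cat: "leaf_list (cat k) = [1..<k+2]"
  by (induction k) auto

lemma leaves_cat: "leaves (cat k) = {1..k+1}"
  by (auto simp: leaves_def leaf_list_cat)

lemma distinct_cat: "distinct (leaf_list (cat k))"
  by (simp add: leaf_list_cat)

lemma cat_RB: "cat k \<in> RB (Suc k)"
  by (auto simp: RB_def leaf_list_cat)

lemma card_leaves_cat: "card (leaves (cat k)) = k + 1"
  by (simp add: leaves_cat)

lemma pos_cat: "p \<in> pos (cat m) \<Longrightarrow>
   (\<exists>d\<le>m. p = replicate d False) \<or> (\<exists>d<m. p = replicate d False @ [True])"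
proof (induction m arbitrary: p)
  case 0 then show ?case by simp
next
  case (Suc k)
  from Suc.prems have "p = [] \<or> p = [True] \<or> (\<exists>q \<in> pos (cat k). p = False # q)" by auto
  then show ?case
  proof (elim disjE)
    assume "p = []" then show ?thesis by (intro disjI1 exI[of _ 0]) simp
  next
    assume "p = [True]" then show ?thesis by (intro disjI2 exI[of _ 0]) simp
  next
    assume "\<exists>q \<in> pos (cat k). p = False # q"
    then obtain q where q: "q \<in> pos (cat k)" "p = False # q" by auto
    from Suc.IH[OF q(1)] show ?thesis
    proof (elim disjE exE conjE)
      fix d assume "d \<le> k" "q = replicate d False"
      then show ?thesis using q(2) by (intro disjI1 exI[of _ "Suc d"]) simp
    next
      fix d assume "d < k" "q = replicate d False @ [True]"
      then show ?thesis using q(2) by (intro disjI2 exI[of _ "Suc d"]) simp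
    qed
  qed
qed

lemma rpath_Node_left: "distinct (leaf_list (Node a b)) \<Longrightarrow> i \<in> leaves a \<Longrightarrow>
   rpath (Node a b) i = Cons False ` S a i"
  by (auto simp: rpath_S S_Node_left)

lemma rpath_Node_right: "distinct (leaf_list (Node a b)) \<Longrightarrow> i \<in> leaves b \<Longrightarrow>
   rpath (Node a b) i = Cons True ` S b i"
  by (auto simp: rpath_S S_Node_right)

lemma S_insert: "i \<in> leaves t \<Longrightarrow> S t i = insert [] (rpath t i)"
  using root_S by (auto simp: rpath_S)

lemma sum_rpath_left:
  assumes "distinct (leaf_list (Node a b))" "i \<in> leaves a"
  shows "(\<Sum>e\<in>rpath (Node a b) i. g e) = g [False] + (\<Sum>e\<in>rpath a i. g (False # e))"
proof -
  have "(\<Sum>e\<in>rpath (Node a b) i. g e) = (\<Sum>e\<in>S a i. g (False # e))"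
    by (simp add: rpath_Node_left[OF assms] sum.reindex)
  also have "\<dots> = g [False] + (\<Sum>e\<in>rpath a i. g (False # e))"
    using sum.remove[OF finite_S root_S[OF assms(2)], of "\<lambda>e. g (False # e)"] by (simp add: rpath_S)
  finally show ?thesis .
qed

lemma cat_MC:
  fixes l :: "bool list \<Rightarrow> real" and h :: "nat \<Rightarrow> real"
  assumes "\<forall>d\<ge>1. l (replicate d False) = h (d-1) - h d"
    and "\<forall>d. l (replicate d False @ [True]) = h d" and "h m = 0"
    and "j \<in> {1..m+1}"
  shows "(\<Sum>e\<in>rpath (cat m) j. l e) = h 0"
  using assms
proof (induction m arbitrary: l h j)
  case 0
  then show ?case by (simp add: rpath_def edges_def)
next
  case (Suc k)
  have d: "distinct (leaf_list (Node (cat k) (Leaf (k+2))))" using distinct_cat[of "Suc k"] by simp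
  show ?case
  proof (cases "j = k + 2")
    case True
    have "rpath (cat (Suc k)) j = {[True]}"
      using rpath_Node_right[OF d] True by (simp add: leaves_Leaf S_Leaf)
    then show ?thesis using Suc.prems(2)[rule_format, of 0] by simp
  next
    case False
    hence jl: "j \<in> leaves (cat k)" using Suc.prems(4) by (auto simp: leaves_cat)
    have p1: "\<forall>d\<ge>1. l (False # replicate d False) = h d - h (Suc d)"
    proof (intro allI impI)
      fix d :: nat assume "d \<ge> 1"
      then show "l (False # replicate d False) = h d - h (Suc d)"
        using Suc.prems(1)[rule_format, of "Suc d"] by simp
    qed
    have p2: "\<forall>d. l (False # replicate d False @ [True]) = h (Suc d)"
      using Suc.prems(2) by (metis append_Cons replicate_Suc)
    have IH: "(\<Sum>e\<in>rpath (cat k) j. l (False # e)) = h 1"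
      using Suc.IH[of "\<lambda>e. l (False # e)" "\<lambda>d. h (Suc d)" j] p1 p2 Suc.prems(3) jl
      by (auto simp: leaves_cat)
    have "(\<Sum>e\<in>rpath (cat (Suc k)) j. l e) = l [False] + (\<Sum>e\<in>rpath (cat k) j. l (False # e))"
      using sum_rpath_left[OF d jl] by simp
    also have "\<dots> = h 0" using IH Suc.prems(1)[rule_format, of 1] by simp
    finally show ?thesis .
  qed
qed

lemma Delta_MC_ge:
  assumes "\<And>k. \<exists>t\<in>RB n. \<exists>i\<in>{1..n}. \<exists>l\<in>{l \<in> pos_lengths t. MC n t l}. A t l i / B t l i = r k"
    and "r \<longlonglongrightarrow> c"
  shows "ereal c \<le> Delta_MC n A B"
proof (rule LIMSEQ_le_const2[of "\<lambda>k. ereal (r k)"])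
  show "(\<lambda>k. ereal (r k)) \<longlonglongrightarrow> ereal c" using assms(2) by (rule tendsto_ereal)
  have "ereal (r k) \<le> Delta_MC n A B" for k
  proof -
    obtain t i l where t: "t \<in> RB n" and i: "i \<in> {1..n}" and l: "l \<in> {l \<in> pos_lengths t. MC n t l}"
      and r: "A t l i / B t l i = r k" using assms(1)[of k] by blast
    show ?thesis unfolding Delta_MC_def
      by (rule SUP_upper2[OF t], rule SUP_upper2[OF i], rule SUP_upper2[OF l]) (simp add: r)
  qed
  then show "\<exists>N. \<forall>k\<ge>N. ereal (r k) \<le> Delta_MC n A B" by blast
qed

lemma lim_aux:
  fixes a b A B :: real
  assumes "b \<noteq> 0"
  shows "(\<lambda>k. (a + inverse (real (Suc k)) * A) / (b + inverse (real (Suc k)) * B)) \<longlonglongrightarrow> a / b"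
proof -
  have "(\<lambda>k. (a + inverse (real (Suc k)) * A) / (b + inverse (real (Suc k)) * B)) \<longlonglongrightarrow>
        (a + 0 * A) / (b + 0 * B)"
    by (intro tendsto_intros LIMSEQ_inverse_real_of_nat) (simp add: assms)
  then show ?thesis by simp
qed

definition hh :: "nat \<Rightarrow> real \<Rightarrow> nat \<Rightarrow> real" where
  "hh m \<epsilon> d = (if d = 0 then 1 + (real m - 1) * \<epsilon> else (real m - real d) * \<epsilon>)"

definition ll :: "nat \<Rightarrow> real \<Rightarrow> bool list \<Rightarrow> real" where
  "ll m \<epsilon> p = (if (\<forall>x\<in>set p. \<not> x) then hh m \<epsilon> (length p - 1) - hh m \<epsilon> (length p)
     else hh m \<epsilon> (length p - 1))"

lemma ll_rep: "ll m \<epsilon> (replicate d False) = hh m \<epsilon> (d-1) - hh m \<epsilon> d"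
  by (simp add: ll_def)

lemma ll_repT: "ll m \<epsilon> (replicate d False @ [True]) = hh m \<epsilon> d"
  by (simp add: ll_def)

lemma ll_F: "ll m \<epsilon> [False] = 1"
  using ll_rep[of m \<epsilon> 1] by (simp add: hh_def algebra_simps)

lemma ll_rep2: "d \<ge> 2 \<Longrightarrow> ll m \<epsilon> (replicate d False) = \<epsilon>"
  using ll_rep[of m \<epsilon> d] by (simp add: hh_def algebra_simps of_nat_diff)

lemma ll_FT: "ll m \<epsilon> [False, True] = (real m - 1) * \<epsilon>"
  using ll_repT[of m \<epsilon> 1] by (simp add: hh_def)

lemma ll_pos:
  assumes m: "m \<ge> 1" and e: "\<epsilon> > 0" and p: "p \<in> edges (cat m)"
  shows "ll m \<epsilon> p > 0"
proof -
  have pp: "p \<in> pos (cat m)" "p \<noteq> []" using p by (auto simp: edges_def)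
  from pos_cat[OF pp(1)] show ?thesis
  proof (elim disjE exE conjE)
    fix d assume d: "d \<le> m" "p = replicate d False"
    then have "d \<ge> 1" using pp(2) by (cases d) auto
    then show ?thesis
    proof (cases "d = 1")
      case True then show ?thesis using d ll_F by simp
    next
      case False then show ?thesis using d ll_rep2[of d m \<epsilon>] e \<open>d \<ge> 1\<close> by simp
    qed
  next
    fix d assume d: "d < m" "p = replicate d False @ [True]"
    have "hh m \<epsilon> d > 0"
      using d(1) e m by (auto simp: hh_def intro!: add_pos_nonneg mult_nonneg_nonneg)
    then show ?thesis using d ll_repT by simp
  qed
qed

lemma ll_MC:
  assumes m: "m \<ge> 1"
  shows "MC (Suc m) (cat m) (ll m \<epsilon>)"
proof -
  have "(\<Sum>e\<in>rpath (cat m) j. ll m \<epsilon> e) = hh m \<epsilon> 0" if "j \<in> {1..Suc m}" for j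
    by (rule cat_MC) (use that m in \<open>auto simp: ll_rep ll_repT hh_def\<close>)
  then show ?thesis by (simp add: MC_def)
qed

lemma ll_pos_lengths: "m \<ge> 1 \<Longrightarrow> \<epsilon> > 0 \<Longrightarrow> ll m \<epsilon> \<in> pos_lengths (cat m)"
  using ll_pos by (auto simp: pos_lengths_def)

lemma sum_split_eps:
  fixes l w :: "'a \<Rightarrow> real"
  assumes "finite X" "x \<in> X" "\<And>e. e \<in> X - {x} \<Longrightarrow> l e = \<epsilon>"
  shows "(\<Sum>e\<in>X. l e / w e) = l x / w x + \<epsilon> * (\<Sum>e\<in>X-{x}. 1 / w e)"
proof -
  have "(\<Sum>e\<in>X. l e / w e) = l x / w x + (\<Sum>e\<in>X-{x}. l e / w e)"
    by (rule sum.remove[OF assms(1,2)])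
  also have "(\<Sum>e\<in>X-{x}. l e / w e) = (\<Sum>e\<in>X-{x}. \<epsilon> * (1 / w e))"
    by (rule sum.cong) (auto simp: assms(3))
  finally show ?thesis by (simp add: sum_distrib_left)
qed

lemma inj_rep: "inj (\<lambda>d. replicate d False)"
  by (rule injI) (metis length_replicate)

lemma rpath_cat_1: "rpath (cat m) 1 = (\<lambda>d. replicate d False) ` {1..m}"
proof (induction m)
  case 0 then show ?case by (simp add: rpath_def edges_def)
next
  case (Suc k)
  have d: "distinct (leaf_list (Node (cat k) (Leaf (k+2))))" using distinct_cat[of "Suc k"] by simp
  have l1: "1 \<in> leaves (cat k)" by (simp add: leaves_cat)
  have "rpath (cat (Suc k)) 1 = Cons False ` S (cat k) 1"
    using rpath_Node_left[OF d l1] by simp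
  also have "S (cat k) 1 = insert [] ((\<lambda>d. replicate d False) ` {1..k})"
    using S_insert[OF l1] Suc.IH by simp
  also have "\<dots> = (\<lambda>d. replicate d False) ` {0..k}"
  proof -
    have "{0..k} = insert 0 {1..k}" by auto
    then show ?thesis by simp
  qed
  also have "Cons False ` \<dots> = (\<lambda>d. replicate d False) ` (Suc ` {0..k})"
    by (simp only: image_image replicate_Suc)
  also have "Suc ` {0..k} = {1..Suc k}" by (simp add: image_Suc_atLeastAtMost)
  finally show ?case .
qed

lemma finite_rpath: "finite (rpath t i)"
  by (simp add: rpath_S finite_S)

lemma F_in_rpath: "m \<ge> 1 \<Longrightarrow> [False] \<in> rpath (cat m) 1"
  unfolding rpath_cat_1 by (rule image_eqI[where x=1]) auto

lemma rest_eps: "e \<in> rpath (cat m) 1 - {[False]} \<Longrightarrow> ll m \<epsilon> e = \<epsilon>"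
proof -
  assume e: "e \<in> rpath (cat m) 1 - {[False]}"
  then obtain d where d: "d \<in> {1..m}" "e = replicate d False" unfolding rpath_cat_1 by auto
  have "d \<noteq> 1" using d e by auto
  then show ?thesis using d ll_rep2[of d m \<epsilon>] by simp
qed

lemma nbelow_F: "m \<ge> 1 \<Longrightarrow> nbelow (cat m) [False] = m"
  by (cases m) (auto simp: nbelow_def card_leaves_cat)

lemma PiES_F: "m \<ge> 1 \<Longrightarrow> PiES (cat m) [False] 1 = 2 ^ (m - 1)"
proof -
  assume m: "m \<ge> 1"
  have "{e' \<in> rpath (cat m) 1. length [False] < length e'} = (\<lambda>d. replicate d False) ` {2..m}"
    unfolding rpath_cat_1 by auto
  moreover have "card ((\<lambda>d. replicate d False) ` {2..m}) = m - 1"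
    using inj_rep by (simp add: card_image inj_on_subset)
  ultimately show ?thesis by (simp add: PiES_def)
qed

lemma FP_cat_1:
  assumes "m \<ge> 1"
  shows "FP (cat m) (ll m \<epsilon>) 1 = 1 / real m + \<epsilon> * (\<Sum>e\<in>rpath (cat m) 1 - {[False]}. 1 / real (nbelow (cat m) e))"
proof -
  have "(\<Sum>e\<in>rpath (cat m) 1. ll m \<epsilon> e / real (nbelow (cat m) e)) =
     ll m \<epsilon> [False] / real (nbelow (cat m) [False]) + \<epsilon> * (\<Sum>e\<in>rpath (cat m) 1 - {[False]}. 1 / real (nbelow (cat m) e))"
    by (rule sum_split_eps[OF finite_rpath F_in_rpath[OF assms]]) (rule rest_eps)
  then show ?thesis unfolding FP_def ll_F nbelow_F[OF assms] by simp
qed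

lemma ES_cat_1:
  assumes "m \<ge> 1"
  shows "ES (cat m) (ll m \<epsilon>) 1 = 1 / 2 ^ (m - 1) + \<epsilon> * (\<Sum>e\<in>rpath (cat m) 1 - {[False]}. 1 / PiES (cat m) e 1)"
proof -
  have "(\<Sum>e\<in>rpath (cat m) 1. ll m \<epsilon> e / PiES (cat m) e 1) =
     ll m \<epsilon> [False] / PiES (cat m) [False] 1 + \<epsilon> * (\<Sum>e\<in>rpath (cat m) 1 - {[False]}. 1 / PiES (cat m) e 1)"
    by (rule sum_split_eps[OF finite_rpath F_in_rpath[OF assms]]) (rule rest_eps)
  then show ?thesis unfolding ES_def ll_F PiES_F[OF assms] by simp
qed

lemma rpath_cat_m: "rpath (cat (Suc (Suc k))) (k+2) = {[False], [False, True]}"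
proof -
  have d: "distinct (leaf_list (Node (cat (Suc k)) (Leaf (k+3))))"
    using distinct_cat[of "Suc (Suc k)"] by (simp only: cat.simps(2)) (simp add: numeral_3_eq_3)
  have l: "k + 2 \<in> leaves (cat (Suc k))" unfolding leaves_cat by simp
  have d2: "distinct (leaf_list (Node (cat k) (Leaf (k+2))))" using distinct_cat[of "Suc k"] by simp
  have l2: "k + 2 \<in> leaves (Leaf (k+2))" by (simp add: leaves_Leaf)
  have "S (cat (Suc k)) (k+2) = {[], [True]}"
    using S_Node_right[OF d2 l2] by (simp add: S_Leaf)
  moreover have "rpath (cat (Suc (Suc k))) (k+2) = Cons False ` S (cat (Suc k)) (k+2)"
    using rpath_Node_left[OF d l] by (simp add: numeral_3_eq_3)
  ultimately show ?thesis by simp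
qed

lemma FP_cat_m:
  "FP (cat (Suc (Suc k))) (ll (Suc (Suc k)) \<epsilon>) (k+2) = 1 / real (Suc (Suc k)) + \<epsilon> * (real (Suc (Suc k)) - 1)"
proof -
  have st: "subtree (cat (Suc (Suc k))) [False] = cat (Suc k)" by (simp only: cat.simps(2) subtree.simps)
  have n1: "nbelow (cat (Suc (Suc k))) [False] = Suc (Suc k)" unfolding nbelow_def st card_leaves_cat by simp
  have n2: "nbelow (cat (Suc (Suc k))) [False, True] = 1" by (simp add: nbelow_def leaves_Leaf)
  have f: "ll (Suc (Suc k)) \<epsilon> [False, True] = \<epsilon> * (real (Suc (Suc k)) - 1)"
    using ll_FT[of "Suc (Suc k)" \<epsilon>] by (simp add: algebra_simps)
  show ?thesis unfolding FP_def rpath_cat_m using n1 n2 ll_F f by simp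
qed

lemma ES_cat_m:
  "ES (cat (Suc (Suc k))) (ll (Suc (Suc k)) \<epsilon>) (k+2) = 1 / 2 + \<epsilon> * (real (Suc (Suc k)) - 1)"
proof -
  have s1: "{e' \<in> {[False], [False, True]}. length [False] < length e'} = {[False, True]}" by auto
  have s2: "{e' \<in> {[False], [False, True]}. length [False, True] < length e'} = {}" by auto
  have p1: "PiES (cat (Suc (Suc k))) [False] (k+2) = 2" unfolding PiES_def rpath_cat_m s1 by simp
  have p2: "PiES (cat (Suc (Suc k))) [False, True] (k+2) = 1" unfolding PiES_def rpath_cat_m s2 by simp
  have f: "ll (Suc (Suc k)) \<epsilon> [False, True] = \<epsilon> * (real (Suc (Suc k)) - 1)"
    using ll_FT[of "Suc (Suc k)" \<epsilon>] by (simp add: algebra_simps)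
  show ?thesis unfolding ES_def rpath_cat_m using p1 p2 ll_F f by simp
qed

theorem theorem1:
  fixes n :: nat
  assumes "n \<ge> 3"
  shows "Delta n FP ES = ereal (2 ^ (n - 2) / (real n - 1)) \<and>
         Delta n ES FP = ereal ((real n - 1) / 2) \<and>
         Delta_MC n FP ES = ereal (2 ^ (n - 2) / (real n - 1)) \<and>
         Delta_MC n ES FP = ereal ((real n - 1) / 2)"
proof -
  obtain k0 where n: "n = Suc (Suc (Suc k0))"
  proof
    show "n = Suc (Suc (Suc (n - 3)))" using assms by simp
  qed
  define m where "m = Suc (Suc k0)"
  have nm: "n = Suc m" and m1: "m \<ge> 1" by (simp_all add: n m_def)
  define eps :: "nat \<Rightarrow> real" where "eps k = inverse (real (Suc k))" for k
  have epos: "eps k > 0" for k by (simp add: eps_def)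
  have tRB: "cat m \<in> RB n" using cat_RB nm by simp
  have lin: "ll m (eps k) \<in> {l \<in> pos_lengths (cat m). MC n (cat m) l}" for k
    using ll_pos_lengths[OF m1 epos] ll_MC[OF m1] nm by simp
  define A where "A = (\<Sum>e\<in>rpath (cat m) 1 - {[False]}. 1 / real (nbelow (cat m) e))"
  define B where "B = (\<Sum>e\<in>rpath (cat m) 1 - {[False]}. 1 / PiES (cat m) e 1)"
  have low1: "ereal (2 ^ (n - 2) / (real n - 1)) \<le> Delta_MC n FP ES"
  proof (rule Delta_MC_ge)
    show "\<exists>t\<in>RB n. \<exists>i\<in>{1..n}. \<exists>l\<in>{l \<in> pos_lengths t. MC n t l}. FP t l i / ES t l i =
      (1 / real m + eps k * A) / (1 / 2 ^ (m - 1) + eps k * B)" for k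
      using tRB lin[of k] FP_cat_1[OF m1, of "eps k"] ES_cat_1[OF m1, of "eps k"] nm
      unfolding A_def B_def by force
    have "(\<lambda>k. (1 / real m + eps k * A) / (1 / 2 ^ (m - 1) + eps k * B)) \<longlonglongrightarrow> (1 / real m) / (1 / 2 ^ (m - 1))"
      unfolding eps_def by (rule lim_aux) simp
    moreover have "(1 / real m) / (1 / 2 ^ (m - 1)) = (2::real) ^ (n - 2) / (real n - 1)"
      by (simp add: nm)
    ultimately show "(\<lambda>k. (1 / real m + eps k * A) / (1 / 2 ^ (m - 1) + eps k * B)) \<longlonglongrightarrow> 2 ^ (n - 2) / (real n - 1)"
      by simp
  qed
  have low2: "ereal ((real n - 1) / 2) \<le> Delta_MC n ES FP"
  proof (rule Delta_MC_ge)
    show "\<exists>t\<in>RB n. \<exists>i\<in>{1..n}. \<exists>l\<in>{l \<in> pos_lengths t. MC n t l}. ES t l i / FP t l i =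
      (1 / 2 + eps k * (real m - 1)) / (1 / real m + eps k * (real m - 1))" for k
    proof (intro bexI)
      show "ES (cat m) (ll m (eps k)) (k0+2) / FP (cat m) (ll m (eps k)) (k0+2) =
        (1 / 2 + eps k * (real m - 1)) / (1 / real m + eps k * (real m - 1))"
        unfolding m_def using FP_cat_m[of k0 "eps k"] ES_cat_m[of k0 "eps k"] by simp
    qed (use tRB lin[of k] n in auto)
    have "(\<lambda>k. (1 / 2 + eps k * (real m - 1)) / (1 / real m + eps k * (real m - 1))) \<longlonglongrightarrow> (1 / 2) / (1 / real m)"
      unfolding eps_def by (rule lim_aux) (use m1 in simp)
    moreover have "(1 / 2) / (1 / real m) = (real n - 1) / 2"
      by (simp add: nm)
    ultimately show "(\<lambda>k. (1 / 2 + eps k * (real m - 1)) / (1 / real m + eps k * (real m - 1))) \<longlonglongrightarrow> (real n - 1) / 2"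
      by simp
  qed
  have up1: "Delta n FP ES \<le> ereal (2 ^ (n - 2) / (real n - 1))" by (rule Delta_FP_ES_le[OF assms])
  have up2: "Delta n ES FP \<le> ereal ((real n - 1) / 2)" by (rule Delta_ES_FP_le[OF assms])
  have mc1: "Delta_MC n FP ES \<le> Delta n FP ES" by (rule Delta_MC_le)
  have mc2: "Delta_MC n ES FP \<le> Delta n ES FP" by (rule Delta_MC_le)
  show ?thesis using up1 up2 mc1 mc2 low1 low2 by (meson antisym order_trans)
qed

end
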